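(* $$D_{\mathbb{R},3}\ge\frac{12^{2/3}}{5/2}\approx2.096.$$ This is witnessed by the $3$-homogeneous polynomial $P_3:\ell_\infty^6\to\mathbb{R}$, $P_3(x)=(x_1+x_2)(x_3^2+x_3x_4-x_4^2)+(x_1-x_2)(x_5^2+x_5x_6-x_6^2)$, which has $\|P_3\|=5/2$ and twelve nonzero coefficients, all of modulus $1$.
   Context: $\ell_\infty^n$ is $\mathbb{R}^n$ with the sup norm; for a polynomial $P$ on $\ell_\infty^n$, $\|P\|=\sup_{x\in[-1,1]^n}|P(x)|$. $D_{\mathbb{R},m}$ is the smallest constant $D$ such that for every $N$ and every real $m$-homogeneous polynomial $P(x)=\sum_{|\alpha|=m}a_\alpha x^\alpha$ on $\ell_\infty^N$, $\big(\sum_{|\alpha|=m}|a_\alpha|^{\frac{2m}{m+1}}\big)^{\frac{m+1}{2m}}\le D\|P\|$. *)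

theory Defs
  imports Complex_Main
begin

text \<open>Real m-homogeneous polynomials on ell_infty^N, represented by their coefficient
  families a indexed by multi-indices alpha (functions nat => nat supported in {0..<N})
  with |alpha| = m.  Variables are x 0, ..., x (N-1).\<close>

definition multi_idx :: "nat \<Rightarrow> nat \<Rightarrow> (nat \<Rightarrow> nat) set" where
  "multi_idx N m = {\<alpha>. (\<forall>i. N \<le> i \<longrightarrow> \<alpha> i = 0) \<and> (\<Sum>i<N. \<alpha> i) = m}"

definition hpoly_eval :: "nat \<Rightarrow> nat \<Rightarrow> ((nat \<Rightarrow> nat) \<Rightarrow> real) \<Rightarrow> (nat \<Rightarrow> real) \<Rightarrow> real" where
  "hpoly_eval N m a x = (\<Sum>\<alpha>\<in>multi_idx N m. a \<alpha> * (\<Prod>i<N. x i ^ \<alpha> i))"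

definition unit_cube :: "nat \<Rightarrow> (nat \<Rightarrow> real) set" where
  "unit_cube N = {x. \<forall>i<N. \<bar>x i\<bar> \<le> 1}"

definition hpoly_norm :: "nat \<Rightarrow> nat \<Rightarrow> ((nat \<Rightarrow> nat) \<Rightarrow> real) \<Rightarrow> real" where
  "hpoly_norm N m a = (SUP x\<in>unit_cube N. \<bar>hpoly_eval N m a x\<bar>)"

definition BH_admissible :: "nat \<Rightarrow> real \<Rightarrow> bool" where
  "BH_admissible m D \<longleftrightarrow>
     (\<forall>N a. (\<Sum>\<alpha>\<in>multi_idx N m. \<bar>a \<alpha>\<bar> powr (2 * real m / (real m + 1)))
               powr ((real m + 1) / (2 * real m)) \<le> D * hpoly_norm N m a)"

definition D_R :: "nat \<Rightarrow> real" where
  "D_R m = Inf {D. BH_admissible m D}"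

definition P3 :: "(nat \<Rightarrow> real) \<Rightarrow> real" where
  "P3 x = (x 0 + x 1) * (x 2 ^ 2 + x 2 * x 3 - x 3 ^ 2)
        + (x 0 - x 1) * (x 4 ^ 2 + x 4 * x 5 - x 5 ^ 2)"

end

theory Submission
  imports Defs
begin

type_synonym tup6 = "nat \<times> nat \<times> nat \<times> nat \<times> nat \<times> nat"

definition tup :: "(nat \<Rightarrow> nat) \<Rightarrow> tup6" where
  "tup \<alpha> = (\<alpha> 0, \<alpha> 1, \<alpha> 2, \<alpha> 3, \<alpha> 4, \<alpha> 5)"

fun fromtup :: "tup6 \<Rightarrow> nat \<Rightarrow> nat" where
  "fromtup (a0,a1,a2,a3,a4,a5) = (\<lambda>i. if i = 0 then a0 else if i = 1 then a1 else if i = 2 then a2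
     else if i = 3 then a3 else if i = 4 then a4 else if i = 5 then a5 else 0)"

fun pr :: "(nat \<Rightarrow> real) \<Rightarrow> tup6 \<Rightarrow> real" where
  "pr x (a0,a1,a2,a3,a4,a5) = x 0 ^ a0 * x 1 ^ a1 * x 2 ^ a2 * x 3 ^ a3 * x 4 ^ a4 * x 5 ^ a5"

definition Tpos :: "tup6 set" where
  "Tpos = {(1,0,2,0,0,0), (1,0,1,1,0,0), (0,1,2,0,0,0), (0,1,1,1,0,0), (1,0,0,0,2,0),
           (1,0,0,0,1,1), (0,1,0,0,0,2)}"

definition Tneg :: "tup6 set" where
  "Tneg = {(1,0,0,2,0,0), (0,1,0,2,0,0), (1,0,0,0,0,2), (0,1,0,0,2,0), (0,1,0,0,1,1)}"

definition cf :: "tup6 \<Rightarrow> real" where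
  "cf t = (if t \<in> Tpos then 1 else if t \<in> Tneg then -1 else 0)"

definition A3 :: "(nat \<Rightarrow> nat) \<Rightarrow> real" where
  "A3 \<alpha> = cf (tup \<alpha>)"

lemma sum6: "(\<Sum>i<(6::nat). f i) = f 0 + f 1 + f 2 + f 3 + f 4 + (f 5 :: 'a::comm_monoid_add)"
  by (simp add: eval_nat_numeral add.assoc)

lemma prod6: "(\<Prod>i<(6::nat). f i) = f 0 * f 1 * f 2 * f 3 * f 4 * (f 5 :: 'a::comm_monoid_mult)"
  by (simp add: eval_nat_numeral mult.assoc)

lemma inj_tup: "inj_on tup (multi_idx 6 m)"
proof (rule inj_onI)
  fix \<alpha> \<beta> assume a: "\<alpha> \<in> multi_idx 6 m" "\<beta> \<in> multi_idx 6 m" "tup \<alpha> = tup \<beta>"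
  show "\<alpha> = \<beta>"
  proof
    fix i
    show "\<alpha> i = \<beta> i"
    proof (cases "i < 6")
      case True
      then have "i = 0 \<or> i = 1 \<or> i = 2 \<or> i = 3 \<or> i = 4 \<or> i = 5" by auto
      then show ?thesis using a(3) by (auto simp: tup_def)
    next
      case False
      then show ?thesis using a(1,2) by (simp add: multi_idx_def)
    qed
  qed
qed

lemma tup_img_sub: "tup ` multi_idx 6 m \<subseteq> {..m} \<times> {..m} \<times> {..m} \<times> {..m} \<times> {..m} \<times> {..m}"
proof
  fix t assume "t \<in> tup ` multi_idx 6 m"
  then obtain \<alpha> where "\<alpha> \<in> multi_idx 6 m" "t = tup \<alpha>" by auto
  then have "\<alpha> 0 + \<alpha> 1 + \<alpha> 2 + \<alpha> 3 + \<alpha> 4 + \<alpha> 5 = m"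
    by (simp add: multi_idx_def sum6)
  then show "t \<in> {..m} \<times> {..m} \<times> {..m} \<times> {..m} \<times> {..m} \<times> {..m}"
    using \<open>t = tup \<alpha>\<close> by (auto simp: tup_def)
qed

lemma fin_img: "finite (tup ` multi_idx 6 m)"
  by (rule finite_subset[OF tup_img_sub]) auto

lemma fin_M: "finite (multi_idx 6 m)"
  using fin_img finite_imageD inj_tup by blast

lemma fromtup_in: "t = (a0,a1,a2,a3,a4,a5) \<Longrightarrow> a0+a1+a2+a3+a4+a5 = m \<Longrightarrow>
   fromtup t \<in> multi_idx 6 m \<and> tup (fromtup t) = t"
  by (simp add: multi_idx_def sum6 tup_def)

lemma T_sub: "Tpos \<union> Tneg \<subseteq> tup ` multi_idx 6 3"
proof
  fix t assume "t \<in> Tpos \<union> Tneg"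
  then obtain a0 a1 a2 a3 a4 a5 where t: "t = (a0,a1,a2,a3,a4,a5)" "a0+a1+a2+a3+a4+a5 = 3"
    by (auto simp: Tpos_def Tneg_def)
  from fromtup_in[OF t] show "t \<in> tup ` multi_idx 6 3" by (metis image_eqI)
qed

lemma eval_A3: "hpoly_eval 6 3 A3 x = P3 x"
proof -
  have "hpoly_eval 6 3 A3 x = (\<Sum>\<alpha>\<in>multi_idx 6 3. cf (tup \<alpha>) * pr x (tup \<alpha>))"
    unfolding hpoly_eval_def A3_def
    by (rule sum.cong) (simp_all add: prod6 tup_def)
  also have "\<dots> = (\<Sum>t\<in>tup ` multi_idx 6 3. cf t * pr x t)"
    by (simp add: sum.reindex[OF inj_tup])
  also have "\<dots> = (\<Sum>t\<in>Tpos \<union> Tneg. cf t * pr x t)"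
    by (rule sum.mono_neutral_right[OF fin_img T_sub]) (auto simp: cf_def)
  also have "\<dots> = P3 x"
    by (simp add: Tpos_def Tneg_def cf_def P3_def algebra_simps power2_eq_square)
  finally show ?thesis .
qed

lemma supp_A3: "{\<alpha>\<in>multi_idx 6 3. A3 \<alpha> \<noteq> 0} = (\<lambda>t. fromtup t) ` (Tpos \<union> Tneg)"
proof
  show "{\<alpha>\<in>multi_idx 6 3. A3 \<alpha> \<noteq> 0} \<subseteq> fromtup ` (Tpos \<union> Tneg)"
  proof
    fix \<alpha> assume h: "\<alpha> \<in> {\<alpha>\<in>multi_idx 6 3. A3 \<alpha> \<noteq> 0}"
    then have tt: "tup \<alpha> \<in> Tpos \<union> Tneg" by (auto simp: A3_def cf_def split: if_splits)
    then obtain a0 a1 a2 a3 a4 a5 where t: "tup \<alpha> = (a0,a1,a2,a3,a4,a5)" "a0+a1+a2+a3+a4+a5 = 3"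
      by (auto simp: Tpos_def Tneg_def)
    have "fromtup (tup \<alpha>) \<in> multi_idx 6 3 \<and> tup (fromtup (tup \<alpha>)) = tup \<alpha>"
      by (rule fromtup_in[OF t])
    then have "fromtup (tup \<alpha>) = \<alpha>" using inj_tup[of 3] h by (auto dest: inj_onD)
    then show "\<alpha> \<in> fromtup ` (Tpos \<union> Tneg)" using tt by (metis image_eqI)
  qed
next
  show "fromtup ` (Tpos \<union> Tneg) \<subseteq> {\<alpha>\<in>multi_idx 6 3. A3 \<alpha> \<noteq> 0}"
  proof
    fix \<alpha> assume "\<alpha> \<in> fromtup ` (Tpos \<union> Tneg)"
    then obtain t where tt: "t \<in> Tpos \<union> Tneg" "\<alpha> = fromtup t" by blast
    then obtain a0 a1 a2 a3 a4 a5 where t: "t = (a0,a1,a2,a3,a4,a5)" "a0+a1+a2+a3+a4+a5 = 3"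
      by (auto simp: Tpos_def Tneg_def)
    from fromtup_in[OF t] tt show "\<alpha> \<in> {\<alpha>\<in>multi_idx 6 3. A3 \<alpha> \<noteq> 0}"
      by (auto simp: A3_def cf_def Tpos_def Tneg_def)
  qed
qed

lemma tup_fromtup: "tup (fromtup t) = t"
  by (cases t) (simp add: tup_def)

lemma card_A3: "card {\<alpha>\<in>multi_idx 6 3. A3 \<alpha> \<noteq> 0} = 12"
proof -
  have inj: "inj_on fromtup (Tpos \<union> Tneg)"
    by (rule inj_on_inverseI[where g=tup]) (rule tup_fromtup)
  have "card (Tpos \<union> Tneg) = 12" by (simp add: Tpos_def Tneg_def)
  then show ?thesis by (simp add: supp_A3 card_image[OF inj])
qed

lemma abs_A3: "\<forall>\<alpha>\<in>multi_idx 6 3. A3 \<alpha> \<noteq> 0 \<longrightarrow> \<bar>A3 \<alpha>\<bar> = 1"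
  by (auto simp: A3_def cf_def)

lemma q_bound: fixes s t :: real assumes "\<bar>s\<bar> \<le> 1" "\<bar>t\<bar> \<le> 1"
  shows "\<bar>s^2 + s*t - t^2\<bar> \<le> 5/4"
proof -
  have s2: "s^2 \<le> 1" using assms(1) by (simp add: abs_square_le_1)
  have t2: "t^2 \<le> 1" using assms(2) by (simp add: abs_square_le_1)
  have e1: "(t - s/2)^2 = t^2 - s*t + s^2/4" by (simp add: power2_eq_square algebra_simps)
  have e2: "(s + t/2)^2 = s^2 + s*t + t^2/4" by (simp add: power2_eq_square algebra_simps)
  have "0 \<le> (t - s/2)^2" "0 \<le> (s + t/2)^2" by simp_all
  then have "s^2 + s*t - t^2 \<le> 5/4" "- (5/4) \<le> s^2 + s*t - t^2" using s2 t2 e1 e2 by linarith+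
  then show ?thesis unfolding abs_le_iff by linarith
qed

lemma abs2: fixes a b :: real assumes "\<bar>a\<bar> \<le> 1" "\<bar>b\<bar> \<le> 1"
  shows "\<bar>a + b\<bar> + \<bar>a - b\<bar> \<le> 2"
proof (cases "0 \<le> a + b")
  case True
  then show ?thesis using assms by (cases "0 \<le> a - b") (simp_all add: abs_le_iff)
next
  case False
  then show ?thesis using assms by (cases "0 \<le> a - b") (simp_all add: abs_le_iff)
qed

lemma P3_bound: assumes "x \<in> unit_cube 6" shows "\<bar>P3 x\<bar> \<le> 5/2"
proof -
  have c: "\<bar>x i\<bar> \<le> 1" if "i < 6" for i using assms that by (simp add: unit_cube_def)
  let ?A = "x 2 ^ 2 + x 2 * x 3 - x 3 ^ 2" and ?B = "x 4 ^ 2 + x 4 * x 5 - x 5 ^ 2"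
  have A: "\<bar>?A\<bar> \<le> 5/4" by (rule q_bound) (simp_all add: c)
  have B: "\<bar>?B\<bar> \<le> 5/4" by (rule q_bound) (simp_all add: c)
  have s: "\<bar>x 0 + x 1\<bar> + \<bar>x 0 - x 1\<bar> \<le> 2" by (rule abs2) (simp_all add: c)
  have "\<bar>P3 x\<bar> \<le> \<bar>(x 0 + x 1) * ?A\<bar> + \<bar>(x 0 - x 1) * ?B\<bar>"
    unfolding P3_def by (rule abs_triangle_ineq)
  also have "\<dots> = \<bar>x 0 + x 1\<bar> * \<bar>?A\<bar> + \<bar>x 0 - x 1\<bar> * \<bar>?B\<bar>"
    by (simp only: abs_mult)
  also have "\<dots> \<le> \<bar>x 0 + x 1\<bar> * (5/4) + \<bar>x 0 - x 1\<bar> * (5/4)"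
    by (intro add_mono mult_left_mono A B) simp_all
  also have "\<dots> = (\<bar>x 0 + x 1\<bar> + \<bar>x 0 - x 1\<bar>) * (5/4)" by (simp add: algebra_simps)
  also have "\<dots> \<le> 2 * (5/4)" by (rule mult_right_mono[OF s]) simp
  also have "\<dots> = 5/2" by simp
  finally show ?thesis .
qed

lemma norm_A3: "hpoly_norm 6 3 A3 = 5/2"
proof -
  define w :: "nat \<Rightarrow> real" where "w = (\<lambda>i. if i = 0 then 1 else if i = 2 then 1 else if i = 3 then 1/2
      else if i = 4 then 1 else if i = 5 then 1/2 else 0)"
  have w: "w \<in> unit_cube 6" by (simp add: w_def unit_cube_def)
  have pw: "\<bar>P3 w\<bar> = 5/2" by (simp add: w_def P3_def power2_eq_square)
  have "(SUP x\<in>unit_cube 6. \<bar>hpoly_eval 6 3 A3 x\<bar>) = 5/2"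
    unfolding eval_A3
    by (rule cSup_eq_maximum) (use w pw P3_bound in \<open>auto intro!: image_eqI[where x=w]\<close>)
  then show ?thesis by (simp add: hpoly_norm_def)
qed

theorem mainTheorem8:
  shows "(\<forall>D. BH_admissible 3 D \<longrightarrow> 12 powr (2/3) / (5/2) \<le> D)
    \<and> (\<exists>a. (\<forall>x. hpoly_eval 6 3 a x = P3 x)
          \<and> hpoly_norm 6 3 a = 5/2
          \<and> card {\<alpha>\<in>multi_idx 6 3. a \<alpha> \<noteq> 0} = 12
          \<and> (\<forall>\<alpha>\<in>multi_idx 6 3. a \<alpha> \<noteq> 0 \<longrightarrow> \<bar>a \<alpha>\<bar> = 1))"
proof (intro conjI allI impI)
  fix D assume "BH_admissible 3 D"
  then have h: "(\<Sum>\<alpha>\<in>multi_idx 6 3. \<bar>A3 \<alpha>\<bar> powr (2 * real 3 / (real 3 + 1)))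
               powr ((real 3 + 1) / (2 * real 3)) \<le> D * hpoly_norm 6 3 A3"
    unfolding BH_admissible_def by blast
  have "(\<Sum>\<alpha>\<in>multi_idx 6 3. \<bar>A3 \<alpha>\<bar> powr (2 * real 3 / (real 3 + 1)))
     = (\<Sum>\<alpha>\<in>multi_idx 6 3. if A3 \<alpha> \<noteq> 0 then 1 else 0)"
    by (rule sum.cong) (use abs_A3 in auto)
  also have "\<dots> = 12"
    using sum.inter_filter[OF fin_M[of 3], where g="\<lambda>_. 1::real" and P="\<lambda>\<alpha>. A3 \<alpha> \<noteq> 0"] card_A3 by simp
  finally have "12 powr (2/3) \<le> D * (5/2)" using h norm_A3 by simp
  then show "12 powr (2/3) / (5/2) \<le> D" by simp
next
  show "\<exists>a. (\<forall>x. hpoly_eval 6 3 a x = P3 x)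
          \<and> hpoly_norm 6 3 a = 5/2
          \<and> card {\<alpha>\<in>multi_idx 6 3. a \<alpha> \<noteq> 0} = 12
          \<and> (\<forall>\<alpha>\<in>multi_idx 6 3. a \<alpha> \<noteq> 0 \<longrightarrow> \<bar>a \<alpha>\<bar> = 1)"
    using eval_A3 norm_A3 card_A3 abs_A3 by blast
qed

end
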